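(* Let $P,Q$ be partially ordered sets, neither of which has an upper bound for the whole set (i.e. $P$ and $Q$ are unbounded). Suppose there exist functions $\varphi:P\to Q$ and $\psi:Q\to P$ such that for every $p\in P$ and $q\in Q$ either $p\le\psi(q)$ or $q\le\varphi(p)$. Then $\operatorname{add}(P)=\operatorname{cof}(P)=\operatorname{cof}(Q)=\operatorname{add}(Q)$.
   Context: For a partially ordered set $P$: $\operatorname{add}(P)$ is the smallest cardinality of a subset $A\subset P$ that has no upper bound in $P$ (i.e. for every $y\in P$ there is $x\in A$ with $x\not\le y$), and $\operatorname{cof}(P)$ is the smallest cardinality of a cofinal subset $A\subset P$ (i.e. for every $x\in P$ there is $y\in A$ with $x\le y$). *)

theory Defs
  imports Main
begin

text \<open>A partially ordered set is modelled as a type of class order (the whole type is the poset).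
Cardinalities are compared via card_of and the cardinal isomorphism ordIso2 (=o) of Main.\<close>

definition unbounded_set :: "'a::order set \<Rightarrow> bool" where
  "unbounded_set A \<longleftrightarrow> (\<forall>y. \<exists>x\<in>A. \<not> x \<le> y)"

definition cofinal_set :: "'a::order set \<Rightarrow> bool" where
  "cofinal_set A \<longleftrightarrow> (\<forall>x. \<exists>y\<in>A. x \<le> y)"

definition poset_add :: "'a::order itself \<Rightarrow> 'a rel" where
  "poset_add _ = (SOME r. \<exists>A::'a set. unbounded_set A \<and> r = card_of A \<and>
      (\<forall>B::'a set. unbounded_set B \<longrightarrow> ordLeq3 (card_of A) (card_of B)))"

definition poset_cof :: "'a::order itself \<Rightarrow> 'a rel" where
  "poset_cof _ = (SOME r. \<exists>A::'a set. cofinal_set A \<and> r = card_of A \<and>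
      (\<forall>B::'a set. cofinal_set B \<longrightarrow> ordLeq3 (card_of A) (card_of B)))"

end

theory Submission
  imports Defs
begin

lemma min_card_exists:
  fixes S :: "'a set \<Rightarrow> bool"
  assumes "S A0"
  shows "\<exists>A. S A \<and> (\<forall>B. S B \<longrightarrow> ordLeq3 (card_of A) (card_of B))"
proof -
  have "card_of A0 \<in> {card_of A | A. S A}" using assms by blast
  then obtain r where
    r: "r \<in> {card_of A | A. S A}" and m: "\<And>y. (y, r) \<in> ordLess \<Longrightarrow> y \<notin> {card_of A | A. S A}"
    by (rule wfE_min[OF wf_ordLess]) blast
  from r obtain A where A: "S A" "r = card_of A" by blast
  have "\<forall>B. S B \<longrightarrow> ordLeq3 (card_of A) (card_of B)"
  proof (intro allI impI)
    fix B assume B: "S B"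
    have "card_of B \<in> {card_of A | A. S A}" using B by blast
    hence "\<not> ordLess2 (card_of B) (card_of A)" using m[of "card_of B"] A(2) by auto
    thus "ordLeq3 (card_of A) (card_of B)"
      using ordLess_or_ordLeq[OF card_of_Well_order card_of_Well_order, of B A] by auto
  qed
  thus ?thesis using A by blast
qed

lemma add_char:
  assumes "unbounded_set (UNIV::'a::order set)"
  shows "\<exists>A::'a set. unbounded_set A \<and> poset_add TYPE('a) = card_of A \<and>
      (\<forall>B::'a set. unbounded_set B \<longrightarrow> ordLeq3 (card_of A) (card_of B))"
proof -
  from min_card_exists[of unbounded_set, OF assms] obtain A :: "'a set" where
    "unbounded_set A \<and> (\<forall>B::'a set. unbounded_set B \<longrightarrow> ordLeq3 (card_of A) (card_of B))" by blast
  hence "\<exists>r. \<exists>A::'a set. unbounded_set A \<and> r = card_of A \<and>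
      (\<forall>B::'a set. unbounded_set B \<longrightarrow> ordLeq3 (card_of A) (card_of B))" by blast
  from someI_ex[OF this] show ?thesis unfolding poset_add_def .
qed

lemma cof_char:
  shows "\<exists>A::'a::order set. cofinal_set A \<and> poset_cof TYPE('a) = card_of A \<and>
      (\<forall>B::'a set. cofinal_set B \<longrightarrow> ordLeq3 (card_of A) (card_of B))"
proof -
  have "cofinal_set (UNIV::'a set)" unfolding cofinal_set_def by blast
  from min_card_exists[of cofinal_set, OF this] obtain A :: "'a set" where
    "cofinal_set A \<and> (\<forall>B::'a set. cofinal_set B \<longrightarrow> ordLeq3 (card_of A) (card_of B))" by blast
  hence "\<exists>r. \<exists>A::'a set. cofinal_set A \<and> r = card_of A \<and>
      (\<forall>B::'a set. cofinal_set B \<longrightarrow> ordLeq3 (card_of A) (card_of B))" by blast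
  from someI_ex[OF this] show ?thesis unfolding poset_cof_def .
qed

lemma cofinal_unbounded:
  assumes "\<not> (\<exists>y::'a::order. \<forall>x::'a. x \<le> y)" "cofinal_set (C::'a set)"
  shows "unbounded_set C"
  unfolding unbounded_set_def
proof
  fix y :: 'a
  from assms(1) obtain x where x: "\<not> x \<le> y" by blast
  from assms(2) obtain c where c: "c \<in> C" "x \<le> c" unfolding cofinal_set_def by blast
  have "\<not> c \<le> y" using x c(2) order_trans by blast
  thus "\<exists>x\<in>C. \<not> x \<le> y" using c(1) by blast
qed

lemma transfer_cof:
  fixes \<phi> :: "'a::order \<Rightarrow> 'b::order" and \<psi> :: "'b \<Rightarrow> 'a"
  assumes "\<forall>p q. p \<le> \<psi> q \<or> q \<le> \<phi> p" "unbounded_set B"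
  shows "cofinal_set (\<psi> ` B)"
  unfolding cofinal_set_def
proof
  fix p
  from assms(2) obtain q where q: "q \<in> B" "\<not> q \<le> \<phi> p" unfolding unbounded_set_def by blast
  hence "p \<le> \<psi> q" using assms(1) by blast
  thus "\<exists>y\<in>\<psi> ` B. p \<le> y" using q(1) by blast
qed

lemma transfer_cof2:
  fixes \<phi> :: "'a::order \<Rightarrow> 'b::order" and \<psi> :: "'b \<Rightarrow> 'a"
  assumes "\<forall>p q. p \<le> \<psi> q \<or> q \<le> \<phi> p" "unbounded_set A"
  shows "cofinal_set (\<phi> ` A)"
  unfolding cofinal_set_def
proof
  fix q
  from assms(2) obtain p where p: "p \<in> A" "\<not> p \<le> \<psi> q" unfolding unbounded_set_def by blast
  hence "q \<le> \<phi> p" using assms(1) by blast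
  thus "\<exists>y\<in>\<phi> ` A. q \<le> y" using p(1) by blast
qed

theorem lemma5p2:
  fixes \<phi> :: "'a::order \<Rightarrow> 'b::order" and \<psi> :: "'b \<Rightarrow> 'a"
  assumes "\<not> (\<exists>y::'a. \<forall>x::'a. x \<le> y)"
    and "\<not> (\<exists>y::'b. \<forall>x::'b. x \<le> y)"
    and "\<forall>p q. p \<le> \<psi> q \<or> q \<le> \<phi> p"
  shows "ordIso2 (poset_add TYPE('a)) (poset_cof TYPE('a))
       \<and> ordIso2 (poset_cof TYPE('a)) (poset_cof TYPE('b))
       \<and> ordIso2 (poset_cof TYPE('b)) (poset_add TYPE('b))"
proof -
  have uA: "unbounded_set (UNIV::'a set)"
    by (rule cofinal_unbounded[OF assms(1)]) (auto simp: cofinal_set_def)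
  have uB: "unbounded_set (UNIV::'b set)"
    by (rule cofinal_unbounded[OF assms(2)]) (auto simp: cofinal_set_def)
  obtain AP :: "'a set" where AP: "unbounded_set AP" "poset_add TYPE('a) = card_of AP"
    "\<forall>B::'a set. unbounded_set B \<longrightarrow> ordLeq3 (card_of AP) (card_of B)" using add_char[OF uA] by blast
  obtain AQ :: "'b set" where AQ: "unbounded_set AQ" "poset_add TYPE('b) = card_of AQ"
    "\<forall>B::'b set. unbounded_set B \<longrightarrow> ordLeq3 (card_of AQ) (card_of B)" using add_char[OF uB] by blast
  obtain CP :: "'a set" where CP: "cofinal_set CP" "poset_cof TYPE('a) = card_of CP"
    "\<forall>B::'a set. cofinal_set B \<longrightarrow> ordLeq3 (card_of CP) (card_of B)" using cof_char by blast
  obtain CQ :: "'b set" where CQ: "cofinal_set CQ" "poset_cof TYPE('b) = card_of CQ"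
    "\<forall>B::'b set. cofinal_set B \<longrightarrow> ordLeq3 (card_of CQ) (card_of B)" using cof_char by blast
  have 1: "ordLeq3 (card_of AP) (card_of CP)" by (rule AP(3)[rule_format, OF cofinal_unbounded[OF assms(1) CP(1)]])
  have 2: "ordLeq3 (card_of CP) (card_of AQ)"
    by (rule ordLeq_transitive[OF CP(3)[rule_format, OF transfer_cof[OF assms(3) AQ(1)]] card_of_image])
  have 3: "ordLeq3 (card_of AQ) (card_of CQ)" by (rule AQ(3)[rule_format, OF cofinal_unbounded[OF assms(2) CQ(1)]])
  have 4: "ordLeq3 (card_of CQ) (card_of AP)"
    by (rule ordLeq_transitive[OF CQ(3)[rule_format, OF transfer_cof2[OF assms(3) AP(1)]] card_of_image])
  have i1: "ordIso2 (card_of AP) (card_of CP)" unfolding ordIso_iff_ordLeq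
    using 1 ordLeq_transitive[OF ordLeq_transitive[OF 2 3] 4] by simp
  have i2: "ordIso2 (card_of CP) (card_of CQ)" unfolding ordIso_iff_ordLeq
    using ordLeq_transitive[OF 2 3] ordLeq_transitive[OF 4 1] by simp
  have i3: "ordIso2 (card_of CQ) (card_of AQ)" unfolding ordIso_iff_ordLeq
    using 3 ordLeq_transitive[OF ordLeq_transitive[OF 4 1] 2] by simp
  from i1 i2 i3 have "ordIso2 (card_of AP) (card_of CP)" "ordIso2 (card_of CP) (card_of CQ)"
    "ordIso2 (card_of CQ) (card_of AQ)" .
  thus ?thesis unfolding AP(2) AQ(2) CP(2) CQ(2) by (intro conjI)
qed

end
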